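(* Let $V$ be a real vector space of finite even dimension with nondegenerate quadratic form $Q$. Let $\rho$ be a $c$-compatible representation of $\mathbb{C}l(V)$ on a finite-dimensional complex vector space $K$ with nondegenerate hermitian form $(\cdot,\cdot)$. Let $\sigma=\mathrm{Ad}_b\circ c$ be an admissible real structure with $b$ in the complex Clifford group and $b$ real, i.e. $c(b)=b$. (1) If $b^\times=b$, then $(\cdot,\cdot)_b:=(\cdot,\rho(b)^{-1}\cdot)$ is a $\sigma$-compatible Krein product on $K$. (2) If $b^\times=-b$, then $(\cdot,\cdot)_b:=(\cdot,i\rho(b)^{-1}\cdot)$ is a $\sigma$-compatible Krein product on $K$.
   Context: $Cl(V,Q)$ is the real Clifford algebra with $v^2=+Q(v)$, $\mathbb{C}l(V)$ its complexification with complex conjugation $c$; $T$ is the linear antiautomorphism restricting to the identity on $V$; $a^\times=c(T(a))$. A real structure is an involutive antilinear algebra automorphism of $\mathbb{C}l(V)$ stabilizing $V^{\mathbb{C}}$; admissible means commuting with $c$; $\mathrm{Ad}_b(a)=bab^{-1}$; the complex Clifford group is the set of invertible $g$ with $gV^{\mathbb{C}}g^{-1}\subset V^{\mathbb{C}}$. For a real structure $\sigma$, $a^{\times_\sigma}=\sigma(T(a))$. $\rho$ is $c$-compatible if $(\rho(a)\psi,\phi)=(\psi,\rho(a^\times)\phi)$ for all $a,\psi,\phi$. A Krein product is a nondegenerate hermitian form; it is $\sigma$-compatible if $(\rho(a)\psi,\phi)'=(\psi,\rho(a^{\times_\sigma})\phi)'$ for all $a\in\mathbb{C}l(V)$, $\psi,\phi\in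 K$. *)

theory Defs
  imports "HOL-Analysis.Analysis"
begin

definition quadratic_form :: "('v::real_vector \<Rightarrow> real) \<Rightarrow> bool" where
  "quadratic_form Q \<longleftrightarrow>
     (\<forall>r v. Q (r *\<^sub>R v) = r\<^sup>2 * Q v) \<and> bilinear (\<lambda>v w. Q (v + w) - Q v - Q w)"

definition nondegenerate_qf :: "('v::real_vector \<Rightarrow> real) \<Rightarrow> bool" where
  "nondegenerate_qf Q \<longleftrightarrow> (\<forall>w. (\<forall>v. Q (v + w) - Q v - Q w = 0) \<longrightarrow> w = 0)"

definition finite_dim_space :: "'v::real_vector itself \<Rightarrow> bool" where
  "finite_dim_space _ \<longleftrightarrow> (\<exists>S::'v set. finite S \<and> span S = UNIV)"

text \<open>Elements of the free complex algebra on the set V (noncommutative polynomials):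
  finitely supported complex-valued functions on words over V.\<close>

type_synonym 'v fa = "'v list \<Rightarrow> complex"

definition FA :: "'v fa set" where
  "FA = {f. finite {w. f w \<noteq> 0}}"

definition fa_zero :: "'v fa" where "fa_zero = (\<lambda>_. 0)"
definition fa_add :: "'v fa \<Rightarrow> 'v fa \<Rightarrow> 'v fa" where "fa_add f g = (\<lambda>w. f w + g w)"
definition fa_diff :: "'v fa \<Rightarrow> 'v fa \<Rightarrow> 'v fa" where "fa_diff f g = (\<lambda>w. f w - g w)"
definition fa_scale :: "complex \<Rightarrow> 'v fa \<Rightarrow> 'v fa" where "fa_scale z f = (\<lambda>w. z * f w)"
definition fa_mult :: "'v fa \<Rightarrow> 'v fa \<Rightarrow> 'v fa" where
  "fa_mult f g = (\<lambda>w. \<Sum>k\<le>length w. f (take k w) * g (drop k w))"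
definition fa_mon :: "'v list \<Rightarrow> 'v fa" where "fa_mon u = (\<lambda>w. if w = u then 1 else 0)"
definition fa_one :: "'v fa" where "fa_one = fa_mon []"

definition cl_rels :: "('v::real_vector \<Rightarrow> real) \<Rightarrow> 'v fa set" where
  "cl_rels Q =
     (\<lambda>(v, w). fa_diff (fa_diff (fa_mon [v + w]) (fa_mon [v])) (fa_mon [w])) ` UNIV
   \<union> (\<lambda>(r, v). fa_diff (fa_mon [r *\<^sub>R v]) (fa_scale (of_real r) (fa_mon [v]))) ` UNIV
   \<union> (\<lambda>v. fa_diff (fa_mon [v, v]) (fa_scale (of_real (Q v)) fa_one)) ` UNIV"

inductive_set cl_ideal :: "('v::real_vector \<Rightarrow> real) \<Rightarrow> 'v fa set" for Q where
  zero: "fa_zero \<in> cl_ideal Q"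
| add: "x \<in> cl_ideal Q \<Longrightarrow> y \<in> cl_ideal Q \<Longrightarrow> fa_add x y \<in> cl_ideal Q"
| scale: "x \<in> cl_ideal Q \<Longrightarrow> fa_scale z x \<in> cl_ideal Q"
| gen: "r \<in> cl_rels Q \<Longrightarrow> fa_mult (fa_mult (fa_mon u) r) (fa_mon w) \<in> cl_ideal Q"

text \<open>Equality in the quotient algebra Cl(V)^C = FA / cl_ideal Q.\<close>
definition cl_eq :: "('v::real_vector \<Rightarrow> real) \<Rightarrow> 'v fa \<Rightarrow> 'v fa \<Rightarrow> bool" where
  "cl_eq Q a b \<longleftrightarrow> fa_diff a b \<in> cl_ideal Q"

text \<open>Complex conjugation c, the transpose T (reversal, identity on V), and a^x = c(T(a)).\<close>
definition cl_conj :: "'v fa \<Rightarrow> 'v fa" where "cl_conj f = (\<lambda>w. cnj (f w))"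
definition cl_T :: "'v fa \<Rightarrow> 'v fa" where "cl_T f = (\<lambda>w. f (rev w))"
definition cl_cross :: "'v fa \<Rightarrow> 'v fa" where "cl_cross a = cl_conj (cl_T a)"

definition VC :: "'v fa set" where
  "VC = {f \<in> FA. \<forall>w. f w \<noteq> 0 \<longrightarrow> length w = 1}"

definition cl_is_inverse :: "('v::real_vector \<Rightarrow> real) \<Rightarrow> 'v fa \<Rightarrow> 'v fa \<Rightarrow> bool" where
  "cl_is_inverse Q a a' \<longleftrightarrow> a' \<in> FA \<and> cl_eq Q (fa_mult a a') fa_one \<and> cl_eq Q (fa_mult a' a) fa_one"

definition cl_invertible :: "('v::real_vector \<Rightarrow> real) \<Rightarrow> 'v fa \<Rightarrow> bool" where
  "cl_invertible Q a \<longleftrightarrow> a \<in> FA \<and> (\<exists>a'. cl_is_inverse Q a a')"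

definition cl_inv :: "('v::real_vector \<Rightarrow> real) \<Rightarrow> 'v fa \<Rightarrow> 'v fa" where
  "cl_inv Q a = (SOME a'. cl_is_inverse Q a a')"

definition cl_clifford_group :: "('v::real_vector \<Rightarrow> real) \<Rightarrow> 'v fa set" where
  "cl_clifford_group Q = {g. cl_invertible Q g \<and>
      (\<forall>v\<in>VC. \<exists>w\<in>VC. cl_eq Q (fa_mult (fa_mult g v) (cl_inv Q g)) w)}"

definition Ad :: "('v::real_vector \<Rightarrow> real) \<Rightarrow> 'v fa \<Rightarrow> 'v fa \<Rightarrow> 'v fa" where
  "Ad Q b a = fa_mult (fa_mult b a) (cl_inv Q b)"

text \<open>A real structure: an involutive antilinear (unital) algebra automorphism of Cl(V)^C
  stabilizing V^C, given on representatives and well defined modulo the ideal.\<close>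
definition real_structure :: "('v::real_vector \<Rightarrow> real) \<Rightarrow> ('v fa \<Rightarrow> 'v fa) \<Rightarrow> bool" where
  "real_structure Q \<sigma> \<longleftrightarrow>
     (\<forall>a\<in>FA. \<sigma> a \<in> FA) \<and>
     (\<forall>a\<in>FA. \<forall>a'\<in>FA. cl_eq Q a a' \<longrightarrow> cl_eq Q (\<sigma> a) (\<sigma> a')) \<and>
     (\<forall>a\<in>FA. \<forall>a'\<in>FA. cl_eq Q (\<sigma> (fa_add a a')) (fa_add (\<sigma> a) (\<sigma> a'))) \<and>
     (\<forall>z. \<forall>a\<in>FA. cl_eq Q (\<sigma> (fa_scale z a)) (fa_scale (cnj z) (\<sigma> a))) \<and>
     (\<forall>a\<in>FA. \<forall>a'\<in>FA. cl_eq Q (\<sigma> (fa_mult a a')) (fa_mult (\<sigma> a) (\<sigma> a'))) \<and>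
     cl_eq Q (\<sigma> fa_one) fa_one \<and>
     (\<forall>a\<in>FA. cl_eq Q (\<sigma> (\<sigma> a)) a) \<and>
     (\<forall>v\<in>VC. \<exists>w\<in>VC. cl_eq Q (\<sigma> v) w)"

definition admissible :: "('v::real_vector \<Rightarrow> real) \<Rightarrow> ('v fa \<Rightarrow> 'v fa) \<Rightarrow> bool" where
  "admissible Q \<sigma> \<longleftrightarrow> (\<forall>a\<in>FA. cl_eq Q (\<sigma> (cl_conj a)) (cl_conj (\<sigma> a)))"

definition clinear_map :: "(complex^'k \<Rightarrow> complex^'k) \<Rightarrow> bool" where
  "clinear_map f \<longleftrightarrow> (\<forall>x y. f (x + y) = f x + f y) \<and> (\<forall>z x. f (z *s x) = z *s f x)"

definition cl_representation ::
  "('v::real_vector \<Rightarrow> real) \<Rightarrow> ('v fa \<Rightarrow> complex^'k \<Rightarrow> complex^'k) \<Rightarrow> bool" where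
  "cl_representation Q \<rho> \<longleftrightarrow>
     (\<forall>a\<in>FA. clinear_map (\<rho> a)) \<and>
     (\<forall>a\<in>FA. \<forall>a'\<in>FA. cl_eq Q a a' \<longrightarrow> \<rho> a = \<rho> a') \<and>
     (\<forall>a\<in>FA. \<forall>a'\<in>FA. \<rho> (fa_add a a') = (\<lambda>\<psi>. \<rho> a \<psi> + \<rho> a' \<psi>)) \<and>
     (\<forall>z. \<forall>a\<in>FA. \<rho> (fa_scale z a) = (\<lambda>\<psi>. z *s \<rho> a \<psi>)) \<and>
     (\<forall>a\<in>FA. \<forall>a'\<in>FA. \<rho> (fa_mult a a') = \<rho> a \<circ> \<rho> a') \<and>
     \<rho> fa_one = id"

definition hermitian_form :: "(complex^'k \<Rightarrow> complex^'k \<Rightarrow> complex) \<Rightarrow> bool" where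
  "hermitian_form h \<longleftrightarrow>
     (\<forall>x y z. h x (y + z) = h x y + h x z) \<and>
     (\<forall>c x y. h x (c *s y) = c * h x y) \<and>
     (\<forall>x y. h y x = cnj (h x y))"

definition nondegenerate_form :: "(complex^'k \<Rightarrow> complex^'k \<Rightarrow> complex) \<Rightarrow> bool" where
  "nondegenerate_form h \<longleftrightarrow> (\<forall>y. (\<forall>x. h x y = 0) \<longrightarrow> y = 0)"

definition krein_product :: "(complex^'k \<Rightarrow> complex^'k \<Rightarrow> complex) \<Rightarrow> bool" where
  "krein_product h \<longleftrightarrow> hermitian_form h \<and> nondegenerate_form h"

definition c_compatible ::
  "('v fa \<Rightarrow> complex^'k \<Rightarrow> complex^'k) \<Rightarrow> (complex^'k \<Rightarrow> complex^'k \<Rightarrow> complex) \<Rightarrow> bool" where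
  "c_compatible \<rho> h \<longleftrightarrow> (\<forall>a\<in>FA. \<forall>\<psi> \<phi>. h (\<rho> a \<psi>) \<phi> = h \<psi> (\<rho> (cl_cross a) \<phi>))"

text \<open>a^x_sigma = \<sigma>(T(a)); \<sigma>-compatible Krein product.\<close>
definition sigma_compatible_krein ::
  "('v fa \<Rightarrow> complex^'k \<Rightarrow> complex^'k) \<Rightarrow> ('v fa \<Rightarrow> 'v fa) \<Rightarrow>
   (complex^'k \<Rightarrow> complex^'k \<Rightarrow> complex) \<Rightarrow> bool" where
  "sigma_compatible_krein \<rho> \<sigma> h' \<longleftrightarrow>
     krein_product h' \<and> (\<forall>a\<in>FA. \<forall>\<psi> \<phi>. h' (\<rho> a \<psi>) \<phi> = h' \<psi> (\<rho> (\<sigma> (cl_T a)) \<phi>))"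

end

theory Submission
  imports Defs
begin

lemma FA_mult:
  assumes "f \<in> FA" "g \<in> FA" shows "fa_mult f g \<in> FA"
proof -
  let ?S = "(\<lambda>(u,v). u @ v) ` ({w. f w \<noteq> 0} \<times> {w. g w \<noteq> 0})"
  have "{w. fa_mult f g w \<noteq> 0} \<subseteq> ?S"
  proof
    fix w assume "w \<in> {w. fa_mult f g w \<noteq> 0}"
    then have "(\<Sum>k\<le>length w. f (take k w) * g (drop k w)) \<noteq> 0"
      by (simp add: fa_mult_def)
    then obtain k where "f (take k w) * g (drop k w) \<noteq> 0"
      by (meson sum.neutral)
    then have "f (take k w) \<noteq> 0" "g (drop k w) \<noteq> 0" by auto
    moreover have "w = take k w @ drop k w" by simp
    ultimately show "w \<in> ?S"
      by (metis (mono_tags, lifting) SigmaI case_prod_conv image_eqI mem_Collect_eq)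
  qed
  moreover have "finite ?S" using assms by (simp add: FA_def)
  ultimately show ?thesis unfolding FA_def using finite_subset by blast
qed

lemma FA_cross:
  assumes "f \<in> FA" shows "cl_cross f \<in> FA"
proof -
  have "{w. cl_cross f w \<noteq> 0} = rev ` {w. f w \<noteq> 0}"
    by (auto simp: cl_cross_def cl_conj_def cl_T_def image_iff) (metis rev_rev_ident)
  then show ?thesis using assms by (simp add: FA_def)
qed

lemma FA_scale:
  assumes "f \<in> FA" shows "fa_scale z f \<in> FA"
proof -
  have "{w. fa_scale z f w \<noteq> 0} \<subseteq> {w. f w \<noteq> 0}" by (auto simp: fa_scale_def)
  then show ?thesis using assms unfolding FA_def using finite_subset by blast
qed

lemma FA_one: "fa_one \<in> FA"
proof -
  have "{w. fa_one w \<noteq> 0} \<subseteq> {[]}" by (auto simp: fa_one_def fa_mon_def)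
  then show ?thesis unfolding FA_def using finite_subset by blast
qed

theorem proposition9:
  fixes Q :: "'v::real_vector \<Rightarrow> real"
    and \<rho> :: "'v fa \<Rightarrow> complex^'k \<Rightarrow> complex^'k"
    and h :: "complex^'k \<Rightarrow> complex^'k \<Rightarrow> complex"
    and b :: "'v fa"
  assumes "finite_dim_space TYPE('v)"
    and "even (dim (UNIV :: 'v set))"
    and "quadratic_form Q"
    and "nondegenerate_qf Q"
    and "cl_representation Q \<rho>"
    and "c_compatible \<rho> h"
    and "hermitian_form h"
    and "nondegenerate_form h"
    and "b \<in> cl_clifford_group Q"
    and "real_structure Q (Ad Q b \<circ> cl_conj)"
    and "admissible Q (Ad Q b \<circ> cl_conj)"
    and "cl_eq Q (cl_conj b) b"
  shows "(cl_eq Q (cl_cross b) b \<longrightarrow>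
            sigma_compatible_krein \<rho> (Ad Q b \<circ> cl_conj) (\<lambda>\<psi> \<phi>. h \<psi> (inv (\<rho> b) \<phi>)))
       \<and> (cl_eq Q (cl_cross b) (fa_scale (-1) b) \<longrightarrow>
            sigma_compatible_krein \<rho> (Ad Q b \<circ> cl_conj) (\<lambda>\<psi> \<phi>. h \<psi> (\<i> *s inv (\<rho> b) \<phi>)))"
proof -
  note rep = assms(5)[unfolded cl_representation_def]
  have Rlin: "\<And>a. a \<in> FA \<Longrightarrow> clinear_map (\<rho> a)" using rep[THEN conjunct1] by blast
  have Req: "\<And>a a'. a \<in> FA \<Longrightarrow> a' \<in> FA \<Longrightarrow> cl_eq Q a a' \<Longrightarrow> \<rho> a = \<rho> a'" using rep[THEN conjunct2, THEN conjunct1] by blast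
  have Rscale: "\<And>z a. a \<in> FA \<Longrightarrow> \<rho> (fa_scale z a) = (\<lambda>\<psi>. z *s \<rho> a \<psi>)" using rep[THEN conjunct2, THEN conjunct2, THEN conjunct2, THEN conjunct1] by blast
  have Rmult: "\<And>a a'. a \<in> FA \<Longrightarrow> a' \<in> FA \<Longrightarrow> \<rho> (fa_mult a a') = \<rho> a \<circ> \<rho> a'" using rep[THEN conjunct2, THEN conjunct2, THEN conjunct2, THEN conjunct2, THEN conjunct1] by blast
  have Rone: "\<rho> fa_one = id" using rep[THEN conjunct2, THEN conjunct2, THEN conjunct2, THEN conjunct2, THEN conjunct2] by blast
  have adj: "\<And>a \<psi> \<phi>. a \<in> FA \<Longrightarrow> h (\<rho> a \<psi>) \<phi> = h \<psi> (\<rho> (cl_cross a) \<phi>)"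
    using assms(6) by (simp add: c_compatible_def)
  have hadd: "\<And>x y z. h x (y + z) = h x y + h x z"
    and hsc: "\<And>c x y. h x (c *s y) = c * h x y"
    and hsym: "\<And>x y. h y x = cnj (h x y)"
    using assms(7) unfolding hermitian_form_def by blast+
  have nd: "\<And>y. (\<forall>x. h x y = 0) \<Longrightarrow> y = 0" using assms(8) by (simp add: nondegenerate_form_def)
  have binv: "cl_invertible Q b" using assms(9) by (simp add: cl_clifford_group_def)
  then have bFA: "b \<in> FA" by (simp add: cl_invertible_def)
  define b' where "b' = cl_inv Q b"
  have "cl_is_inverse Q b b'" unfolding b'_def cl_inv_def
    using binv by (simp add: cl_invertible_def someI_ex)
  then have b'FA: "b' \<in> FA" and e1: "cl_eq Q (fa_mult b b') fa_one" and e2: "cl_eq Q (fa_mult b' b) fa_one"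
    by (auto simp: cl_is_inverse_def)
  define P where "P = \<rho> b"
  define B where "B = \<rho> b'"
  have PB: "P \<circ> B = id" unfolding P_def B_def
    using Req[OF FA_mult[OF bFA b'FA] FA_one e1] Rmult[OF bFA b'FA] Rone by simp
  have BP: "B \<circ> P = id" unfolding P_def B_def
    using Req[OF FA_mult[OF b'FA bFA] FA_one e2] Rmult[OF b'FA bFA] Rone by simp
  have invP: "inv (\<rho> b) = B" using inv_unique_comp[OF PB BP] by (simp add: P_def)
  have PBx: "\<And>x. P (B x) = x" using PB by (metis comp_apply id_apply)
  have Blin: "clinear_map B" using Rlin[OF b'FA] by (simp add: B_def)
  have Badd: "\<And>x y. B (x + y) = B x + B y" and Bsc: "\<And>z x. B (z *s x) = z *s B x"
    using Blin by (auto simp: clinear_map_def)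
  have Plin: "clinear_map P" using Rlin[OF bFA] by (simp add: P_def)
  have P0: "P 0 = 0"
    using Plin unfolding clinear_map_def by (metis vector_smult_lzero)
  have sig: "\<And>a. a \<in> FA \<Longrightarrow> \<rho> ((Ad Q b \<circ> cl_conj) (cl_T a)) = P \<circ> \<rho> (cl_cross a) \<circ> B"
  proof -
    fix a :: "'v fa" assume aFA: "a \<in> FA"
    have cFA: "cl_cross a \<in> FA" using FA_cross[OF aFA] .
    have "(Ad Q b \<circ> cl_conj) (cl_T a) = fa_mult (fa_mult b (cl_cross a)) b'"
      by (simp add: Ad_def b'_def cl_cross_def)
    then show "\<rho> ((Ad Q b \<circ> cl_conj) (cl_T a)) = P \<circ> \<rho> (cl_cross a) \<circ> B"
      using Rmult[OF FA_mult[OF bFA cFA] b'FA] Rmult[OF bFA cFA] by (simp add: P_def B_def)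
  qed
  have crossFA: "cl_cross b \<in> FA" using FA_cross[OF bFA] .
  have part1: "sigma_compatible_krein \<rho> (Ad Q b \<circ> cl_conj) (\<lambda>\<psi> \<phi>. h \<psi> (inv (\<rho> b) \<phi>))"
    if cb: "cl_eq Q (cl_cross b) b"
  proof -
    have Pc: "\<rho> (cl_cross b) = P" using Req[OF crossFA bFA cb] by (simp add: P_def)
    have Padj: "\<And>u v. h (P u) v = h u (P v)" using adj[OF bFA] Pc by (simp add: P_def)
    have herm: "hermitian_form (\<lambda>\<psi> \<phi>. h \<psi> (B \<phi>))"
      unfolding hermitian_form_def
    proof (intro conjI allI)
      fix x y
      have "h y (B x) = h (P (B y)) (B x)" by (simp add: PBx)
      also have "\<dots> = h (B y) x" using Padj[of "B y" "B x"] PBx by simp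
      also have "\<dots> = cnj (h x (B y))" by (rule hsym)
      finally show "h y (B x) = cnj (h x (B y))" .
    qed (auto simp: Badd Bsc hadd hsc)
    have ndg: "nondegenerate_form (\<lambda>\<psi> \<phi>. h \<psi> (B \<phi>))"
      unfolding nondegenerate_form_def
    proof (intro allI impI)
      fix y assume "\<forall>x. h x (B y) = 0"
      then have "B y = 0" using nd by blast
      then show "y = 0" using PBx[of y] P0 by simp
    qed
    show ?thesis
      unfolding sigma_compatible_krein_def krein_product_def invP
    proof (intro conjI herm ndg ballI allI)
      fix a :: "'v fa" and \<psi> \<phi> assume aFA: "a \<in> FA"
      have "h (\<rho> a \<psi>) (B \<phi>) = h \<psi> (\<rho> (cl_cross a) (B \<phi>))" using adj[OF aFA] .
      also have "\<dots> = h \<psi> (B (\<rho> ((Ad Q b \<circ> cl_conj) (cl_T a)) \<phi>))"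
        using sig[OF aFA] BP by (simp add: pointfree_idE)
      finally show "h (\<rho> a \<psi>) (B \<phi>) = h \<psi> (B (\<rho> ((Ad Q b \<circ> cl_conj) (cl_T a)) \<phi>))" .
    qed
  qed
  have part2: "sigma_compatible_krein \<rho> (Ad Q b \<circ> cl_conj) (\<lambda>\<psi> \<phi>. h \<psi> (\<i> *s inv (\<rho> b) \<phi>))"
    if cb: "cl_eq Q (cl_cross b) (fa_scale (-1) b)"
  proof -
    have Pc: "\<rho> (cl_cross b) = (\<lambda>\<psi>. (-1) *s P \<psi>)"
      using Req[OF crossFA FA_scale[OF bFA] cb] Rscale[OF bFA] by (simp add: P_def)
    have Padj: "\<And>u v. h (P u) v = - h u (P v)"
    proof -
      fix u v
      have "h (P u) v = h u ((-1) *s P v)" using adj[OF bFA, of u v] Pc by (simp only: P_def)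
      also have "\<dots> = - h u (P v)" by (simp only: hsc) simp
      finally show "h (P u) v = - h u (P v)" .
    qed
    have herm: "hermitian_form (\<lambda>\<psi> \<phi>. h \<psi> (\<i> *s B \<phi>))"
      unfolding hermitian_form_def
    proof (intro conjI allI)
      fix x y
      have "h y (B x) = h (P (B y)) (B x)" by (simp add: PBx)
      also have "\<dots> = - h (B y) x" using Padj[of "B y" "B x"] PBx by simp
      also have "\<dots> = - cnj (h x (B y))" using hsym[of x "B y"] by simp
      finally have "h y (B x) = - cnj (h x (B y))" .
      then show "h y (\<i> *s B x) = cnj (h x (\<i> *s B y))" by (simp add: hsc)
    next
      fix x y z show "h x (\<i> *s B (y + z)) = h x (\<i> *s B y) + h x (\<i> *s B z)"
        by (simp add: Badd hsc hadd vector_add_ldistrib distrib_left)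
    next
      fix c x y show "h x (\<i> *s B (c *s y)) = c * h x (\<i> *s B y)"
        by (simp add: Bsc hsc)
    qed
    have ndg: "nondegenerate_form (\<lambda>\<psi> \<phi>. h \<psi> (\<i> *s B \<phi>))"
      unfolding nondegenerate_form_def
    proof (intro allI impI)
      fix y assume "\<forall>x. h x (\<i> *s B y) = 0"
      then have "\<i> *s B y = 0" using nd by blast
      then have "B y = 0" by simp
      then show "y = 0" using PBx[of y] P0 by simp
    qed
    show ?thesis
      unfolding sigma_compatible_krein_def krein_product_def invP
    proof (intro conjI herm ndg ballI allI)
      fix a :: "'v fa" and \<psi> \<phi> assume aFA: "a \<in> FA"
      have lin: "clinear_map (\<rho> (cl_cross a))" using Rlin[OF FA_cross[OF aFA]] .
      have "h (\<rho> a \<psi>) (\<i> *s B \<phi>) = h \<psi> (\<rho> (cl_cross a) (\<i> *s B \<phi>))" using adj[OF aFA] .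
      also have "\<dots> = h \<psi> (\<i> *s \<rho> (cl_cross a) (B \<phi>))"
        using lin by (simp add: clinear_map_def)
      also have "\<dots> = h \<psi> (\<i> *s B (\<rho> ((Ad Q b \<circ> cl_conj) (cl_T a)) \<phi>))"
        using sig[OF aFA] BP by (simp add: pointfree_idE)
      finally show "h (\<rho> a \<psi>) (\<i> *s B \<phi>) = h \<psi> (\<i> *s B (\<rho> ((Ad Q b \<circ> cl_conj) (cl_T a)) \<phi>))" .
    qed
  qed
  show ?thesis using part1 part2 by blast
qed

end
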